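(* Let $\mathcal M=(M,\le,{}^\perp)$ be a complete orthomodular lattice, $L$ an involutive submonoid of $\mathbf{Lin}(\mathcal M)$ containing all Sasaki projections, and $\mathscr P(L)=(\mathscr P(L),\bigcup,\odot,{}^*,{\sim},\{\mathrm{id}_M\})$ the corresponding involutive generalized dynamic algebra. Then $\mathscr P(L)$ is a semi-Foulis dynamic algebra.
   Context: For an orthomodular lattice and $m\in M$, $\pi_m(x)=m\wedge(m^\perp\vee x)$. A map $f\colon M\to M$ is linear if there is $g\colon M\to M$ (unique, written $f^*$) with $f(x)\le y^\perp\iff x\le g(y)^\perp$ for all $x,y$. $\mathbf{Lin}(\mathcal M)$ is the involutive monoid of linear maps under composition, $f\mapsto f^*$, $\mathrm{id}_M$. $\mathscr P(L)$ is the powerset of $L$ with union, $A\odot B=\{a\circ b\}$, $A^*=\{a^*\mid a\in A\}$, ${\sim}A=\{\pi_{(\bigvee_{a\in A}a(1))^\perp}\}$. An involutive generalized dynamic algebra $(K,\bigsqcup,\odot,{}^*,{\sim},e)$ has test set $\widetilde K=\{{\sim}k\}$, joins $\bigvee W={\sim}{\sim}(\bigsqcup W)$ on $\widetilde K$, $w^\perp={\sim}w$, and $k\preceq l$ iff $\bigvee\{k,l\}=l$; it is a semi-Foulis dynamic algebra if $(\widetilde K,\preceq,{}^\perp)$ is a complete orthomodular lattice. *)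

theory Defs
  imports Main
begin

definition is_lub :: "'a set \<Rightarrow> ('a \<Rightarrow> 'a \<Rightarrow> bool) \<Rightarrow> 'a set \<Rightarrow> 'a \<Rightarrow> bool" where
  "is_lub A le S x \<longleftrightarrow> x \<in> A \<and> (\<forall>s\<in>S. le s x) \<and> (\<forall>y\<in>A. (\<forall>s\<in>S. le s y) \<longrightarrow> le x y)"

definition cjoin :: "'a set \<Rightarrow> ('a \<Rightarrow> 'a \<Rightarrow> bool) \<Rightarrow> 'a set \<Rightarrow> 'a" where
  "cjoin A le S = (THE x. is_lub A le S x)"

definition complete_lattice_on :: "'a set \<Rightarrow> ('a \<Rightarrow> 'a \<Rightarrow> bool) \<Rightarrow> bool" where
  "complete_lattice_on A le \<longleftrightarrow>
     (\<forall>x\<in>A. le x x) \<and>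
     (\<forall>x\<in>A. \<forall>y\<in>A. le x y \<longrightarrow> le y x \<longrightarrow> x = y) \<and>
     (\<forall>x\<in>A. \<forall>y\<in>A. \<forall>z\<in>A. le x y \<longrightarrow> le y z \<longrightarrow> le x z) \<and>
     (\<forall>S. S \<subseteq> A \<longrightarrow> (\<exists>x. is_lub A le S x))"

definition orthocomplementation_on :: "'a set \<Rightarrow> ('a \<Rightarrow> 'a \<Rightarrow> bool) \<Rightarrow> ('a \<Rightarrow> 'a) \<Rightarrow> bool" where
  "orthocomplementation_on A le oc \<longleftrightarrow>
     (\<forall>x\<in>A. oc x \<in> A) \<and>
     (\<forall>x\<in>A. oc (oc x) = x) \<and>
     (\<forall>x\<in>A. \<forall>y\<in>A. le x y \<longrightarrow> le (oc y) (oc x)) \<and>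
     (\<forall>x\<in>A. \<forall>z\<in>A. le z x \<longrightarrow> le z (oc x) \<longrightarrow> (\<forall>w\<in>A. le z w))"

text \<open>Orthomodular law: x \<le> y implies y = x join (y meet oc x), where y meet oc x = oc (oc y join x).\<close>
definition complete_OML_on :: "'a set \<Rightarrow> ('a \<Rightarrow> 'a \<Rightarrow> bool) \<Rightarrow> ('a \<Rightarrow> 'a) \<Rightarrow> bool" where
  "complete_OML_on A le oc \<longleftrightarrow>
     complete_lattice_on A le \<and> orthocomplementation_on A le oc \<and>
     (\<forall>x\<in>A. \<forall>y\<in>A. le x y \<longrightarrow>
        y = cjoin A le {x, oc (cjoin A le {oc y, x})})"

definition sasaki :: "('m::complete_lattice \<Rightarrow> 'm) \<Rightarrow> 'm \<Rightarrow> 'm \<Rightarrow> 'm" where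
  "sasaki oc m x = inf m (sup (oc m) x)"

definition lin_adjoint_pair :: "('m::complete_lattice \<Rightarrow> 'm) \<Rightarrow> ('m \<Rightarrow> 'm) \<Rightarrow> ('m \<Rightarrow> 'm) \<Rightarrow> bool" where
  "lin_adjoint_pair oc f g \<longleftrightarrow> (\<forall>x y. f x \<le> oc y \<longleftrightarrow> x \<le> oc (g y))"

definition lin_map :: "('m::complete_lattice \<Rightarrow> 'm) \<Rightarrow> ('m \<Rightarrow> 'm) \<Rightarrow> bool" where
  "lin_map oc f \<longleftrightarrow> (\<exists>g. lin_adjoint_pair oc f g)"

definition lin_adj :: "('m::complete_lattice \<Rightarrow> 'm) \<Rightarrow> ('m \<Rightarrow> 'm) \<Rightarrow> ('m \<Rightarrow> 'm)" where
  "lin_adj oc f = (THE g. lin_adjoint_pair oc f g)"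

definition Lin :: "('m::complete_lattice \<Rightarrow> 'm) \<Rightarrow> ('m \<Rightarrow> 'm) set" where
  "Lin oc = {f. lin_map oc f}"

definition involutive_submonoid_Lin :: "('m::complete_lattice \<Rightarrow> 'm) \<Rightarrow> ('m \<Rightarrow> 'm) set \<Rightarrow> bool" where
  "involutive_submonoid_Lin oc L \<longleftrightarrow>
     L \<subseteq> Lin oc \<and> id \<in> L \<and> (\<forall>f\<in>L. \<forall>g\<in>L. f \<circ> g \<in> L) \<and> (\<forall>f\<in>L. lin_adj oc f \<in> L)"

definition P_odot :: "('m \<Rightarrow> 'm) set \<Rightarrow> ('m \<Rightarrow> 'm) set \<Rightarrow> ('m \<Rightarrow> 'm) set" where
  "P_odot A B = {a \<circ> b | a b. a \<in> A \<and> b \<in> B}"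

definition P_star :: "('m::complete_lattice \<Rightarrow> 'm) \<Rightarrow> ('m \<Rightarrow> 'm) set \<Rightarrow> ('m \<Rightarrow> 'm) set" where
  "P_star oc A = lin_adj oc ` A"

definition P_neg :: "('m::complete_lattice \<Rightarrow> 'm) \<Rightarrow> ('m \<Rightarrow> 'm) set \<Rightarrow> ('m \<Rightarrow> 'm) set" where
  "P_neg oc A = {sasaki oc (oc (SUP a\<in>A. a top))}"

definition tests :: "'k set \<Rightarrow> ('k \<Rightarrow> 'k) \<Rightarrow> 'k set" where
  "tests K neg = neg ` K"

definition test_join :: "('k set \<Rightarrow> 'k) \<Rightarrow> ('k \<Rightarrow> 'k) \<Rightarrow> 'k set \<Rightarrow> 'k" where
  "test_join bigsq neg W = neg (neg (bigsq W))"

definition test_le :: "('k set \<Rightarrow> 'k) \<Rightarrow> ('k \<Rightarrow> 'k) \<Rightarrow> 'k \<Rightarrow> 'k \<Rightarrow> bool" where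
  "test_le bigsq neg k l \<longleftrightarrow> test_join bigsq neg {k, l} = l"

definition semi_Foulis_dynamic_algebra :: "'k set \<Rightarrow> ('k set \<Rightarrow> 'k) \<Rightarrow> ('k \<Rightarrow> 'k) \<Rightarrow> bool" where
  "semi_Foulis_dynamic_algebra K bigsq neg \<longleftrightarrow>
     complete_OML_on (tests K neg) (test_le bigsq neg) neg"

end

theory Submission imports Defs begin
lemma lub_unique:
  assumes "complete_lattice_on A le" "is_lub A le S x" "is_lub A le S y"
  shows "x = y"
proof -
  have "le x y" "le y x" "x \<in> A" "y \<in> A" using assms(2,3) unfolding is_lub_def by auto
  moreover have "\<forall>x\<in>A. \<forall>y\<in>A. le x y \<longrightarrow> le y x \<longrightarrow> x = y"
    using assms(1) unfolding complete_lattice_on_def by (elim conjE)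
  ultimately show ?thesis by blast
qed

lemma cjoin_eq:
  assumes "complete_lattice_on A le" "is_lub A le S x"
  shows "cjoin A le S = x"
  unfolding cjoin_def
  proof (rule the_equality)
  show "is_lub A le S x" by (rule assms(2))
  fix y assume "is_lub A le S y"
  then show "y = x" using lub_unique[OF assms(1)] assms(2) by metis
qed

lemma lub_transfer:
  assumes le': "\<And>x y. le' (\<phi> x) (\<phi> y) = le x y"
  shows "is_lub (range \<phi>) le' (\<phi> ` S) (\<phi> x) \<longleftrightarrow> is_lub UNIV le S x"
proof -
  have a: "(\<forall>s\<in>\<phi> ` S. le' s (\<phi> x)) \<longleftrightarrow> (\<forall>s\<in>S. le s x)" using le' by simp
  have b: "(\<forall>y\<in>range \<phi>. (\<forall>s\<in>\<phi> ` S. le' s y) \<longrightarrow> le' (\<phi> x) y) \<longleftrightarrow>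
           (\<forall>y. (\<forall>s\<in>S. le s y) \<longrightarrow> le x y)" using le' by simp
  show ?thesis unfolding is_lub_def using a b by simp
qed
lemma transfer_OML:
  fixes \<phi> :: "'a \<Rightarrow> 'b"
  assumes inj: "inj \<phi>"
    and le': "\<And>x y. le' (\<phi> x) (\<phi> y) = le x y"
    and oc': "\<And>x. oc' (\<phi> x) = \<phi> (oc x)"
    and C: "complete_OML_on UNIV le oc"
  shows "complete_OML_on (range \<phi>) le' oc'"
proof -
  have CL: "complete_lattice_on UNIV le" and OC: "orthocomplementation_on UNIV le oc"
    and OM: "\<forall>x\<in>UNIV. \<forall>y\<in>UNIV. le x y \<longrightarrow> y = cjoin UNIV le {x, oc (cjoin UNIV le {oc y, x})}"
    using C unfolding complete_OML_on_def by blast+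
  have rfl: "\<forall>x\<in>UNIV. le x x" and asym: "\<forall>x\<in>UNIV. \<forall>y\<in>UNIV. le x y \<longrightarrow> le y x \<longrightarrow> x = y"
    and trn: "\<forall>x\<in>UNIV. \<forall>y\<in>UNIV. \<forall>z\<in>UNIV. le x y \<longrightarrow> le y z \<longrightarrow> le x z"
    and exS: "\<forall>S. S \<subseteq> UNIV \<longrightarrow> (\<exists>x. is_lub UNIV le S x)"
    using CL unfolding complete_lattice_on_def by blast+
  have oc1: "\<forall>x\<in>UNIV. oc (oc x) = x" and oc2: "\<forall>x\<in>UNIV. \<forall>y\<in>UNIV. le x y \<longrightarrow> le (oc y) (oc x)"
    and oc3: "\<forall>x\<in>UNIV. \<forall>z\<in>UNIV. le z x \<longrightarrow> le z (oc x) \<longrightarrow> (\<forall>w\<in>UNIV. le z w)"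
    using OC unfolding orthocomplementation_on_def by blast+
  have ex: "\<exists>x. is_lub UNIV le S x" for S using exS by blast
  have CL': "complete_lattice_on (range \<phi>) le'"
    unfolding complete_lattice_on_def
  proof (intro conjI ballI allI impI)
    show "le' x x" if "x \<in> range \<phi>" for x using that rfl le' by auto
    show "x = y" if "x \<in> range \<phi>" "y \<in> range \<phi>" "le' x y" "le' y x" for x y
    proof -
      note hh = that
      obtain a b where "x = \<phi> a" "y = \<phi> b" using hh(1,2) by blast
      moreover have "\<forall>x y. le x y \<longrightarrow> le y x \<longrightarrow> x = y"
        using asym by blast
      ultimately show ?thesis using hh(3,4) le' by metis
    qed
    show "le' x z" if "x \<in> range \<phi>" "y \<in> range \<phi>" "z \<in> range \<phi>" "le' x y" "le' y z" for x y z
    proof -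
      note hh = that
      obtain a b c where "x = \<phi> a" "y = \<phi> b" "z = \<phi> c" using hh(1,2,3) by blast
      moreover have "\<forall>x y z. le x y \<longrightarrow> le y z \<longrightarrow> le x z"
        using trn by blast
      ultimately show ?thesis using hh(4,5) le' by metis
    qed
    show "\<exists>x. is_lub (range \<phi>) le' T x" if "T \<subseteq> range \<phi>" for T
    proof -
      have T: "T = \<phi> ` (\<phi> -` T)" using that by auto
      obtain x where "is_lub UNIV le (\<phi> -` T) x" using ex by blast
      then have "is_lub (range \<phi>) le' (\<phi> ` (\<phi> -` T)) (\<phi> x)" using lub_transfer[where le'=le' and \<phi>=\<phi> and le=le, OF le'] by blast
      then show ?thesis using T by metis
    qed
  qed
  have cj: "cjoin (range \<phi>) le' (\<phi> ` S) = \<phi> (cjoin UNIV le S)" for S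
  proof -
    obtain x where x: "is_lub UNIV le S x" using ex by blast
    have 1: "cjoin UNIV le S = x" by (rule cjoin_eq[OF CL x])
    have "is_lub (range \<phi>) le' (\<phi> ` S) (\<phi> x)" using x lub_transfer[where le'=le' and \<phi>=\<phi> and le=le, OF le'] by blast
    then have "cjoin (range \<phi>) le' (\<phi> ` S) = \<phi> x" by (rule cjoin_eq[OF CL'])
    then show ?thesis using 1 by simp
  qed
  have OC': "orthocomplementation_on (range \<phi>) le' oc'"
    unfolding orthocomplementation_on_def
  proof (intro conjI ballI impI)
    fix x assume "x \<in> range \<phi>"
    then obtain a where a: "x = \<phi> a" by blast
    show "oc' x \<in> range \<phi>" using a oc' by simp
    show "oc' (oc' x) = x" using a oc' oc1 by simp
  next
    fix x y assume "x \<in> range \<phi>" "y \<in> range \<phi>" "le' x y"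
    then obtain a b where "x = \<phi> a" "y = \<phi> b" "le a b" using le' by blast
    then show "le' (oc' y) (oc' x)" using oc' le' oc2 by simp
  next
    fix x z w assume "x \<in> range \<phi>" "z \<in> range \<phi>" "w \<in> range \<phi>" "le' z x" "le' z (oc' x)"
    note hh = this
    obtain a c d where e: "x = \<phi> a" "z = \<phi> c" "w = \<phi> d" using hh(1,2,3) by blast
    have "le c a" using hh(4) e le' by simp
    moreover have "le c (oc a)" using hh(5) e le' oc' by simp
    ultimately have "le c d" using oc3 by blast
    then show "le' z w" using le' e by simp
  qed
  have OM': "\<forall>x\<in>range \<phi>. \<forall>y\<in>range \<phi>. le' x y \<longrightarrow>
        y = cjoin (range \<phi>) le' {x, oc' (cjoin (range \<phi>) le' {oc' y, x})}"
  proof (intro ballI impI)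
    fix x y assume "x \<in> range \<phi>" "y \<in> range \<phi>" "le' x y"
    then obtain a b where ab: "x = \<phi> a" "y = \<phi> b" "le a b" using le' by auto
    have "{oc' y, x} = \<phi> ` {oc b, a}" using ab oc' by simp
    then have "cjoin (range \<phi>) le' {oc' y, x} = \<phi> (cjoin UNIV le {oc b, a})" using cj[of "{oc b, a}"] by simp
    then have "{x, oc' (cjoin (range \<phi>) le' {oc' y, x})} = \<phi> ` {a, oc (cjoin UNIV le {oc b, a})}"
      using ab oc' by simp
    then have "cjoin (range \<phi>) le' {x, oc' (cjoin (range \<phi>) le' {oc' y, x})}
       = \<phi> (cjoin UNIV le {a, oc (cjoin UNIV le {oc b, a})})" using cj[of "{a, oc (cjoin UNIV le {oc b, a})}"] by simp
    also have "\<dots> = y" using OM ab by auto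
    finally show "y = cjoin (range \<phi>) le' {x, oc' (cjoin (range \<phi>) le' {oc' y, x})}" by simp
  qed
  show ?thesis unfolding complete_OML_on_def by (intro conjI CL' OC' OM')
qed

lemma sasaki_top: "sasaki oc n top = (n::'m::complete_lattice)"
  unfolding sasaki_def by simp

theorem theorem3p11:
  fixes oc :: "'m::complete_lattice \<Rightarrow> 'm"
    and L :: "('m \<Rightarrow> 'm) set"
  assumes "complete_OML_on UNIV (\<le>) oc"
    and "involutive_submonoid_Lin oc L"
    and "\<forall>m. sasaki oc m \<in> L"
  shows "semi_Foulis_dynamic_algebra (Pow L) Union (P_neg oc)"
proof -
  define \<phi> where "\<phi> n = {sasaki oc n}" for n
  have ococ: "oc (oc x) = x" for x
  proof -
    have "orthocomplementation_on UNIV (\<le>) oc"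
      using assms(1) unfolding complete_OML_on_def by (rule conjunct1[OF conjunct2])
    then have "\<forall>x\<in>UNIV. oc (oc x) = x" unfolding orthocomplementation_on_def by (rule conjunct1[OF conjunct2])
    then show ?thesis by (rule bspec) simp
  qed
  have inj: "inj \<phi>" unfolding \<phi>_def inj_def
    by (intro allI impI) (metis singleton_inject sasaki_top)
  have neg: "P_neg oc (\<phi> a) = \<phi> (oc a)" for a
    unfolding \<phi>_def P_neg_def by (simp add: sasaki_top)
  have le': "test_le Union (P_neg oc) (\<phi> a) (\<phi> b) = (a \<le> b)" for a b
  proof -
    have "P_neg oc (\<Union>{\<phi> a, \<phi> b}) = \<phi> (oc (sup a b))"
      unfolding \<phi>_def P_neg_def by (simp add: sasaki_top sup_commute)
    then have "test_join Union (P_neg oc) {\<phi> a, \<phi> b} = \<phi> (sup a b)"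
      unfolding test_join_def by (simp add: neg ococ)
    then show ?thesis unfolding test_le_def using inj
      by (simp add: inj_eq le_iff_sup)
  qed
  have tests: "tests (Pow L) (P_neg oc) = range \<phi>"
  proof
    show "tests (Pow L) (P_neg oc) \<subseteq> range \<phi>"
      unfolding tests_def P_neg_def \<phi>_def by auto
    show "range \<phi> \<subseteq> tests (Pow L) (P_neg oc)"
    proof
      fix x assume "x \<in> range \<phi>"
      then obtain n where n: "x = \<phi> n" by auto
      have "P_neg oc (\<phi> (oc n)) = x" using n neg ococ by simp
      moreover have "\<phi> (oc n) \<in> Pow L" using assms(3) unfolding \<phi>_def by auto
      ultimately show "x \<in> tests (Pow L) (P_neg oc)" unfolding tests_def by blast
    qed
  qed
  show ?thesis unfolding semi_Foulis_dynamic_algebra_def tests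
    by (rule transfer_OML[OF inj le' neg assms(1)])
qed

end
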